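(* Let $n,m$ be positive integers. For a dominant region $R\in\mathcal{R}^m_n$ with Shi tableau entries $k_{i,j}=k_{i,j}(R)$, $1\le i\le j\le n$, define $\varphi_n(R)=(\lambda_1,\dots,\lambda_n)$ with $\lambda_i=\sum_{j=i}^n k_{i,j}$. Then $\varphi_n$ is a bijection from $\mathcal{R}^m_n$ onto $\mathcal{P}^m_n$.
   Context: Type $A_n$: $V=\{x\in\mathbb{R}^{n+1}:\sum x_i=0\}$, positive roots $\alpha_{ij}=\varepsilon_i-\varepsilon_{j+1}$ ($1\le i\le j\le n$), $H_{\alpha,k}=\{v\in V:\langle v,\alpha\rangle=k\}$. $\mathrm{Cat}^m(A_n)$ is the arrangement of the $H_{\alpha,k}$, $\alpha$ positive, $0\le k\le m$; $\mathcal{R}^m_n$ is the set of its dominant regions (regions contained in $\{v:\langle v,\alpha\rangle\ge0\ \forall\alpha>0\}$). For $R\in\mathcal{R}^m_n$ and $1\le i\le j\le n$, $k_{i,j}(R)$ is the unique integer $k\in\{0,\dots,m\}$ such that for all $x\in R$: $k\le\langle\alpha_{ij},x\rangle\le k+1$ if $k<m$, and $\langle\alpha_{ij},x\rangle\ge m$ if $k=m$ (i.e. the number of hyperplanes $H_{\alpha_{ij},t}$, $1\le t\le m$, separating $R$ from the origin). The collection $\{k_{i,j}(R)\}$ is the Shi tableau of $R$. $\mathcal{P}^m_n$ is the set of integer partitions $(\lambda_1\ge\cdots\ge\lambda_n\ge0)$ with $\lambda_i\le m(n-i+1)$. *)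

theory Defs
  imports "HOL-Analysis.Analysis"
begin

text \<open>Vectors of R^(n+1) are modelled as functions nat => real supported on {1..n+1}
  (coordinate i is x i); the topology is the product topology on nat => real,
  which on this finite-dimensional subspace is the Euclidean one.\<close>

definition typeA_V :: "nat \<Rightarrow> (nat \<Rightarrow> real) set" where
  "typeA_V n = {x. (\<forall>i. i \<notin> {1..n+1} \<longrightarrow> x i = 0) \<and> (\<Sum>i=1..n+1. x i) = 0}"

text \<open>The pairing of the positive root alpha_ij = e_i - e_(j+1) with x.\<close>
definition root_pair :: "nat \<Rightarrow> nat \<Rightarrow> (nat \<Rightarrow> real) \<Rightarrow> real" where
  "root_pair i j x = x i - x (j+1)"

definition cat_hyperplanes :: "nat \<Rightarrow> nat \<Rightarrow> (nat \<Rightarrow> real) set" where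
  "cat_hyperplanes n m = {x \<in> typeA_V n. \<exists>i j k. 1 \<le> i \<and> i \<le> j \<and> j \<le> n \<and> k \<le> m
      \<and> root_pair i j x = real k}"

definition cat_regions :: "nat \<Rightarrow> nat \<Rightarrow> (nat \<Rightarrow> real) set set" where
  "cat_regions n m = {connected_component_set (typeA_V n - cat_hyperplanes n m) x | x.
      x \<in> typeA_V n - cat_hyperplanes n m}"

definition dominant_cone :: "nat \<Rightarrow> (nat \<Rightarrow> real) set" where
  "dominant_cone n = {v. \<forall>i j. 1 \<le> i \<and> i \<le> j \<and> j \<le> n \<longrightarrow> root_pair i j v \<ge> 0}"

definition dominant_regions :: "nat \<Rightarrow> nat \<Rightarrow> (nat \<Rightarrow> real) set set" where
  "dominant_regions n m = {R \<in> cat_regions n m. R \<subseteq> dominant_cone n}"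

text \<open>Shi tableau entry: number of hyperplanes H_(alpha_ij,t), 1 <= t <= m,
  separating R from the origin.\<close>
definition shi_k :: "nat \<Rightarrow> (nat \<Rightarrow> real) set \<Rightarrow> nat \<Rightarrow> nat \<Rightarrow> nat" where
  "shi_k m R i j = card {t \<in> {1..m}. \<forall>x \<in> R. root_pair i j x > real t}"

definition partitions_P :: "nat \<Rightarrow> nat \<Rightarrow> (nat \<Rightarrow> nat) set" where
  "partitions_P n m = {lam. (\<forall>i. i \<notin> {1..n} \<longrightarrow> lam i = 0)
      \<and> (\<forall>i. 1 \<le> i \<and> i < n \<longrightarrow> lam (i+1) \<le> lam i)
      \<and> (\<forall>i\<in>{1..n}. lam i \<le> m * (n - i + 1))}"

definition phi :: "nat \<Rightarrow> nat \<Rightarrow> (nat \<Rightarrow> real) set \<Rightarrow> nat \<Rightarrow> nat" where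
  "phi n m R = (\<lambda>i. if i \<in> {1..n} then (\<Sum>j=i..n. shi_k m R i j) else 0)"

end

theory Submission
  imports Defs
begin

lemma rp_cont: "continuous_on UNIV (root_pair i j)"
  unfolding root_pair_def[abs_def]
  by (intro continuous_intros continuous_on_product_coordinates)

lemma comp_sign:
  fixes f :: "(nat \<Rightarrow> real) \<Rightarrow> real"
  assumes y: "y \<in> connected_component_set S x" and ne: "\<forall>z\<in>S. f z \<noteq> c"
    and cf: "continuous_on UNIV f"
  shows "f y > c \<longleftrightarrow> f x > c"
proof -
  let ?C = "connected_component_set S x"
  have x: "x \<in> ?C" using y connected_component_in[of S x y] by auto
  have con: "connected (f ` ?C)"
    by (rule connected_continuous_image[OF continuous_on_subset[OF cf]]) auto
  have sub: "?C \<subseteq> S" by (rule connected_component_subset)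
  have "c \<notin> f ` ?C" using ne sub by auto
  moreover have "f x \<in> f ` ?C" "f y \<in> f ` ?C" using x y by auto
  ultimately have iv: "\<And>u v. u \<in> f ` ?C \<Longrightarrow> v \<in> f ` ?C \<Longrightarrow> \<not> (u \<le> c \<and> c \<le> v)"
    using con unfolding connected_iff_interval by blast
  have "f x \<noteq> c" "f y \<noteq> c" using ne sub x y by auto
  then show ?thesis using iv[OF \<open>f x \<in> _\<close> \<open>f y \<in> _\<close>] iv[OF \<open>f y \<in> _\<close> \<open>f x \<in> _\<close>] by linarith
qed

lemma comp_path:
  fixes x y :: "nat \<Rightarrow> real"
  assumes "\<forall>s\<in>{0..1::real}. (\<lambda>k. (1-s)*x k + s*y k) \<in> S"
  shows "y \<in> connected_component_set S x"
proof -
  let ?p = "\<lambda>s::real. (\<lambda>k. (1-s)*x k + s*y k)"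
  have "continuous_on {0..1} ?p"
    by (intro continuous_on_coordinatewise_then_product continuous_intros)
  then have "connected (?p ` {0..1})"
    by (intro connected_continuous_image) auto
  moreover have "?p ` {0..1} \<subseteq> S" using assms by auto
  moreover have "x \<in> ?p ` {0..1}" "y \<in> ?p ` {0..1}"
    by (rule rev_image_eqI[of 0], simp, simp) (rule rev_image_eqI[of 1], simp, simp)
  ultimately have "connected_component S x y"
    by (intro connected_componentI[of "?p ` {0..1}"])
  then show ?thesis by simp
qed

definition dec_on :: "nat set \<Rightarrow> (nat \<Rightarrow> real) \<Rightarrow> bool" where
  "dec_on I x \<longleftrightarrow> (\<forall>a\<in>I. \<forall>b\<in>I. a < b \<longrightarrow> x b < x a)"

definition gen_on :: "nat set \<Rightarrow> nat \<Rightarrow> (nat \<Rightarrow> real) \<Rightarrow> bool" where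
  "gen_on I m x \<longleftrightarrow> (\<forall>a\<in>I. \<forall>b\<in>I. a \<noteq> b \<longrightarrow> (\<forall>t::int. \<bar>t\<bar> \<le> int m \<longrightarrow> x a + of_int t \<noteq> x b))"

definition cnt :: "nat \<Rightarrow> nat \<Rightarrow> (nat \<Rightarrow> real) \<Rightarrow> nat \<Rightarrow> nat" where
  "cnt m N x i = card (SIGMA l:{Suc i..N}. {t\<in>{1..m}. x l + real t < x i})"

lemma L1:
  assumes "x \<in> typeA_V n - cat_hyperplanes n m" "x \<in> dominant_cone n"
  shows "dec_on {1..Suc n} x" "gen_on {1..Suc n} m x"
proof -
  have nh: "\<And>i j k. 1 \<le> i \<Longrightarrow> i \<le> j \<Longrightarrow> j \<le> n \<Longrightarrow> k \<le> m \<Longrightarrow> x i - x (j+1) \<noteq> real k"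
    using assms(1) unfolding cat_hyperplanes_def root_pair_def by blast
  have dm: "\<And>i j. 1 \<le> i \<Longrightarrow> i \<le> j \<Longrightarrow> j \<le> n \<Longrightarrow> x (j+1) \<le> x i"
    using assms(2) unfolding dominant_cone_def root_pair_def by force
  have lt: "x b < x a" if "1 \<le> a" "a < b" "b \<le> Suc n" for a b
  proof -
    have "x b \<le> x a" using dm[of a "b-1"] that by simp
    moreover have "x a - x b \<noteq> real 0" using nh[of a "b-1" 0] that by simp
    ultimately show ?thesis by simp
  qed
  show "dec_on {1..Suc n} x" unfolding dec_on_def using lt by auto
  show "gen_on {1..Suc n} m x" unfolding gen_on_def
  proof (intro ballI impI allI)
    fix a b t assume ab: "a \<in> {1..Suc n}" "b \<in> {1..Suc n}" "a \<noteq> b" and t: "\<bar>t\<bar> \<le> int m"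
    show "x a + of_int t \<noteq> x b"
    proof (cases "a < b")
      case True
      then have "x b < x a" using lt ab by auto
      show ?thesis
      proof (cases "t \<ge> 0")
        case True then show ?thesis using \<open>x b < x a\<close> by linarith
      next
        case False
        then have "x a - x b \<noteq> real (nat (-t))" using nh[of a "b-1" "nat (-t)"] ab t \<open>a<b\<close> by auto
        then show ?thesis using False by auto
      qed
    next
      case False
      then have "b < a" using ab by auto
      then have "x a < x b" using lt ab by auto
      show ?thesis
      proof (cases "t \<ge> 0")
        case False then show ?thesis using \<open>x a < x b\<close> by linarith
      next
        case True
        then have "x b - x a \<noteq> real (nat t)" using nh[of b "a-1" "nat t"] ab t \<open>b<a\<close> by auto
        then show ?thesis using True by auto
      qed
    qed
  qed
qed

lemma L2:
  assumes x: "x \<in> typeA_V n - cat_hyperplanes n m" and R: "R = connected_component_set (typeA_V n - cat_hyperplanes n m) x"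
    and i: "i \<in> {1..n}"
  shows "phi n m R i = cnt m (Suc n) x i"
proof -
  let ?U = "typeA_V n - cat_hyperplanes n m"
  have sk: "shi_k m R i j = card {t\<in>{1..m}. x (Suc j) + real t < x i}" if j: "i \<le> j" "j \<le> n" for j
  proof -
    have "{t \<in> {1..m}. \<forall>z \<in> R. root_pair i j z > real t} = {t\<in>{1..m}. x (Suc j) + real t < x i}"
    proof (intro Collect_cong conj_cong refl)
      fix t assume t: "t \<in> {1..m}"
      have ne: "\<forall>z\<in>?U. root_pair i j z \<noteq> real t"
        using i j t unfolding cat_hyperplanes_def by fastforce
      have "(\<forall>z \<in> R. root_pair i j z > real t) \<longleftrightarrow> root_pair i j x > real t"
      proof
        have "x \<in> R" using R x by simp
        then show "\<forall>z \<in> R. root_pair i j z > real t \<Longrightarrow> root_pair i j x > real t" by blast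
      next
        assume "root_pair i j x > real t"
        then show "\<forall>z \<in> R. root_pair i j z > real t"
          using comp_sign[OF _ ne rp_cont] R by blast
      qed
      then show "(\<forall>z \<in> R. root_pair i j z > real t) \<longleftrightarrow> x (Suc j) + real t < x i"
        unfolding root_pair_def by auto
    qed
    then show ?thesis unfolding shi_k_def by simp
  qed
  have "phi n m R i = (\<Sum>j=i..n. card {t\<in>{1..m}. x (Suc j) + real t < x i})"
    unfolding phi_def using i sk by simp
  also have "\<dots> = (\<Sum>l=Suc i..Suc n. card {t\<in>{1..m}. x l + real t < x i})"
    by (rule sum.shift_bounds_cl_Suc_ivl[symmetric])
  also have "\<dots> = cnt m (Suc n) x i"
    unfolding cnt_def by (rule card_SigmaI[symmetric]) auto
  finally show ?thesis .
qed

lemma conv_gt: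
  fixes a b c s :: real
  assumes "a > c" "b > c" "0 \<le> s" "s \<le> 1"
  shows "(1-s)*a + s*b > c"
proof (cases "s < 1")
  case True
  have "(1-s)*a > (1-s)*c" using True assms by (intro mult_strict_left_mono) auto
  moreover have "s*b \<ge> s*c" using assms by (intro mult_left_mono) auto
  ultimately show ?thesis by (simp add: algebra_simps)
next
  case False
  then have "s = 1" using assms by auto
  then show ?thesis using assms by simp
qed

lemma conv_lt:
  fixes a b c s :: real
  assumes "a < c" "b < c" "0 \<le> s" "s \<le> 1"
  shows "(1-s)*a + s*b < c"
  using conv_gt[of "-c" "-a" "-b" s] assms by (simp add: algebra_simps)

lemma L3:
  assumes x: "x \<in> typeA_V n - cat_hyperplanes n m" and y: "y \<in> typeA_V n - cat_hyperplanes n m"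
    and same: "\<And>i j k. 1 \<le> i \<Longrightarrow> i \<le> j \<Longrightarrow> j \<le> n \<Longrightarrow> k \<le> m \<Longrightarrow>
        (root_pair i j y > real k \<longleftrightarrow> root_pair i j x > real k)"
  shows "y \<in> connected_component_set (typeA_V n - cat_hyperplanes n m) x"
proof (rule comp_path, intro ballI)
  fix s :: real assume s: "s \<in> {0..1}"
  let ?z = "\<lambda>k. (1-s)*x k + s*y k"
  have zV: "?z \<in> typeA_V n"
  proof -
    have "(\<Sum>i=1..n+1. ?z i) = (1-s) * (\<Sum>i=1..n+1. x i) + s * (\<Sum>i=1..n+1. y i)"
      unfolding sum.distrib sum_distrib_left by (rule refl)
    also have "\<dots> = 0" using x y unfolding typeA_V_def by simp
    finally show ?thesis using x y unfolding typeA_V_def by simp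
  qed
  have "?z \<notin> cat_hyperplanes n m"
  proof
    assume "?z \<in> cat_hyperplanes n m"
    then obtain i j k where ijk: "1 \<le> i" "i \<le> j" "j \<le> n" "k \<le> m" and eq: "root_pair i j ?z = real k"
      unfolding cat_hyperplanes_def by blast
    have rz: "root_pair i j ?z = (1-s) * root_pair i j x + s * root_pair i j y"
      unfolding root_pair_def by (simp add: algebra_simps)
    have nx: "root_pair i j x \<noteq> real k" using x ijk unfolding cat_hyperplanes_def by auto
    have ny: "root_pair i j y \<noteq> real k" using y ijk unfolding cat_hyperplanes_def by auto
    have sm: "root_pair i j y > real k \<longleftrightarrow> root_pair i j x > real k" using same ijk by blast
    show False
    proof (cases "root_pair i j x > real k")
      case True
      then have "root_pair i j ?z > real k" unfolding rz using sm s by (intro conv_gt) auto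
      then show False using eq by simp
    next
      case False
      then have "root_pair i j x < real k" "root_pair i j y < real k" using nx ny sm by auto
      then have "root_pair i j ?z < real k" unfolding rz using s by (intro conv_lt) auto
      then show False using eq by simp
    qed
  qed
  then show "?z \<in> typeA_V n - cat_hyperplanes n m" using zV by simp
qed

lemma downset_eq:
  fixes f g :: "'a \<Rightarrow> real"
  assumes fin: "finite S" and ord: "\<And>p q. p \<in> S \<Longrightarrow> q \<in> S \<Longrightarrow> (f p < f q \<longleftrightarrow> g p < g q)"
    and cd: "card {p\<in>S. f p < c} = card {p\<in>S. g p < d}"
  shows "{p\<in>S. f p < c} = {p\<in>S. g p < d}"
proof -
  let ?A = "{p\<in>S. f p < c}" and ?B = "{p\<in>S. g p < d}"
  have "?A \<subseteq> ?B \<or> ?B \<subseteq> ?A"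
  proof (rule ccontr)
    assume "\<not> (?A \<subseteq> ?B \<or> ?B \<subseteq> ?A)"
    then obtain p q where p: "p \<in> ?A" "p \<notin> ?B" and q: "q \<in> ?B" "q \<notin> ?A" by blast
    then have "f p < f q" by auto
    then have "g p < g q" using ord p q by auto
    then show False using p q by auto
  qed
  moreover have "finite ?A" "finite ?B" using fin by auto
  ultimately show ?thesis
  proof (elim disjE)
    assume "?A \<subseteq> ?B" "finite ?A" "finite ?B"
    then show ?thesis using card_seteq[of ?B ?A] cd by simp
  next
    assume "?B \<subseteq> ?A" "finite ?A" "finite ?B"
    then show ?thesis using card_seteq[of ?A ?B] cd by simp
  qed
qed

lemma cnt_alt: "cnt m N x i = card {p \<in> (SIGMA l:{Suc i..N}. {1..m}). x (fst p) + real (snd p) < x i}"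
  unfolding cnt_def by (rule arg_cong[where f=card]) auto

lemma L4:
  assumes N: "1 \<le> N" and dx: "dec_on {1..N} x" and gx: "gen_on {1..N} m x"
    and dy: "dec_on {1..N} y" and gy: "gen_on {1..N} m y"
    and ce: "\<And>i. 1 \<le> i \<Longrightarrow> i < N \<Longrightarrow> cnt m N x i = cnt m N y i"
  shows "\<forall>a\<in>{1..N}. \<forall>b\<in>{1..N}. \<forall>t::int. \<bar>t\<bar> \<le> int m \<longrightarrow> (x b + of_int t < x a \<longleftrightarrow> y b + of_int t < y a)"
  using N
proof (induction rule: inc_induct)
  case base
  show ?case by auto
next
  case (step i)
  note IH = step.IH
  let ?S = "SIGMA l:{Suc i..N}. {1..m}"
  let ?fx = "\<lambda>p. x (fst p) + real (snd p)" and ?fy = "\<lambda>p. y (fst p) + real (snd p)"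
  have ord: "?fx p < ?fx q \<longleftrightarrow> ?fy p < ?fy q" if p: "p \<in> ?S" and q: "q \<in> ?S" for p q
  proof -
    obtain l t where pl: "p = (l,t)" by force
    obtain l' t' where ql: "q = (l',t')" by force
    have l: "l \<in> {Suc i..N}" "t \<in> {1..m}" using p pl by auto
    have l': "l' \<in> {Suc i..N}" "t' \<in> {1..m}" using q ql by auto
    have ab: "\<bar>int t - int t'\<bar> \<le> int m" using l l' by auto
    have e1: "?fx p < ?fx q \<longleftrightarrow> x l + of_int (int t - int t') < x l'" using pl ql by auto
    have e2: "?fy p < ?fy q \<longleftrightarrow> y l + of_int (int t - int t') < y l'" using pl ql by auto
    have "x l + of_int (int t - int t') < x l' \<longleftrightarrow> y l + of_int (int t - int t') < y l'"
      using IH l(1) l'(1) ab by blast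
    then show ?thesis unfolding e1 e2 .
  qed
  have cdx: "card {p\<in>?S. ?fx p < x i} = card {p\<in>?S. ?fy p < y i}"
    using ce[of i] step.hyps unfolding cnt_alt by simp
  have D: "{p\<in>?S. ?fx p < x i} = {p\<in>?S. ?fy p < y i}"
    by (rule downset_eq[OF _ ord cdx]) auto
  have Dm: "x l + real s < x i \<longleftrightarrow> y l + real s < y i" if "l \<in> {Suc i..N}" "s \<in> {1..m}" for l s
  proof -
    have "(l,s) \<in> {p\<in>?S. ?fx p < x i} \<longleftrightarrow> (l,s) \<in> {p\<in>?S. ?fy p < y i}" using D by simp
    then show ?thesis using that by auto
  qed
  show ?case
  proof (intro ballI allI impI)
    fix a b and t :: int assume a: "a \<in> {i..N}" and b: "b \<in> {i..N}" and t: "\<bar>t\<bar> \<le> int m"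
    show "x b + of_int t < x a \<longleftrightarrow> y b + of_int t < y a"
    proof (cases "a = i")
      case ai: True
      show ?thesis
      proof (cases "b = i")
        case True then show ?thesis using ai by simp
      next
        case False
        then have b': "b \<in> {Suc i..N}" using b by auto
        have lx: "x b < x a" "y b < y a" using dx dy ai b' step.hyps unfolding dec_on_def by auto
        show ?thesis
        proof (cases "t \<le> 0")
          case True then show ?thesis using lx by linarith
        next
          case False
          have tt: "of_int t = real (nat t)" using False by simp
          have nt: "nat t \<in> {1..m}" using t False by auto
          show ?thesis unfolding tt ai using Dm[OF b' nt] .
        qed
      qed
    next
      case an: False
      then have a': "a \<in> {Suc i..N}" using a by auto
      show ?thesis
      proof (cases "b = i")
        case bi: True
        have lx: "x a < x b" "y a < y b" using dx dy bi a' step.hyps unfolding dec_on_def by auto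
        show ?thesis
        proof (cases "t \<ge> 0")
          case True then show ?thesis using lx by linarith
        next
          case False
          define s where "s = nat (-t)"
          have ts: "of_int t = - real s" "s \<in> {1..m}" using t False unfolding s_def by auto
          have ai: "a \<noteq> i" "a \<in> {1..N}" "i \<in> {1..N}" "\<bar>int s\<bar> \<le> int m"
            using a' step.hyps ts by auto
          have "x a + of_int (int s) \<noteq> x i" using gx ai unfolding gen_on_def by blast
          then have nx: "x a + real s \<noteq> x i" by simp
          have "y a + of_int (int s) \<noteq> y i" using gy ai unfolding gen_on_def by blast
          then have ny: "y a + real s \<noteq> y i" by simp
          have "x i - real s < x a \<longleftrightarrow> y i - real s < y a"
            using Dm[OF a' ts(2)] nx ny by linarith
          then show ?thesis using bi ts by simp
        qed
      next
        case False
        then have "b \<in> {Suc i..N}" using b by auto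
        then show ?thesis using IH a' t by blast
      qed
    qed
  qed
qed

lemma cnt_le: "cnt m N x i \<le> m * (N - i)"
proof -
  have "cnt m N x i \<le> card ({Suc i..N} \<times> {1..m})"
    unfolding cnt_def by (rule card_mono) auto
  also have "\<dots> = m * (N - i)" by (simp add: card_cartesian_product)
  finally show ?thesis .
qed

lemma cnt_mono:
  assumes "dec_on {1..N} x" "1 \<le> i" "Suc i \<le> N"
  shows "cnt m N x (Suc i) \<le> cnt m N x i"
proof -
  have lt: "x (Suc i) < x i" using assms unfolding dec_on_def by auto
  show ?thesis unfolding cnt_def
    by (rule card_mono) (use lt in auto)
qed

lemma count_same:
  fixes P :: "real set"
  assumes "finite P"
  shows "\<exists>y'>y. y' \<notin> P \<and> {p\<in>P. p < y'} = {p\<in>P. p \<le> y}"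
proof (cases "{p\<in>P. p > y} = {}")
  case True
  have all: "p \<le> y" if "p \<in> P" for p
    using True that by (metis (mono_tags, lifting) empty_Collect_eq not_le)
  show ?thesis
  proof (intro exI[of _ "y+1"] conjI)
    show "y + 1 \<notin> P" using all by force
    show "{p\<in>P. p < y + 1} = {p\<in>P. p \<le> y}" using all by force
  qed simp
next
  case False
  let ?A = "{p\<in>P. p > y}"
  have fa: "finite ?A" using assms by auto
  let ?q = "Min ?A"
  have q: "?q \<in> ?A" using Min_in[OF fa False] .
  have qm: "\<And>p. p \<in> ?A \<Longrightarrow> ?q \<le> p" using Min_le[OF fa] by blast
  show ?thesis
  proof (intro exI[of _ "(y + ?q)/2"] conjI)
    show "(y + ?q)/2 > y" using q by auto
    show "(y + ?q)/2 \<notin> P"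
    proof
      assume h: "(y + ?q)/2 \<in> P"
      then have "(y + ?q)/2 \<in> ?A" using q by auto
      then show False using qm[of "(y + ?q)/2"] q by auto
    qed
    show "{p\<in>P. p < (y + ?q)/2} = {p\<in>P. p \<le> y}"
    proof (intro Collect_cong conj_cong refl iffI)
      fix p assume p: "p \<in> P" "p < (y + ?q)/2"
      show "p \<le> y"
      proof (rule ccontr)
        assume "\<not> p \<le> y"
        then have "p \<in> ?A" using p by auto
        then show False using qm[of p] p q by auto
      qed
    next
      fix p assume "p \<le> y" then show "p < (y + ?q)/2" using q by auto
    qed
  qed
qed

lemma count_step:
  fixes P :: "real set"
  assumes fin: "finite P" and y: "y \<notin> P" and lt: "card {p\<in>P. p < y} < card P"
  shows "\<exists>y'>y. y' \<notin> P \<and> card {p\<in>P. p < y'} = Suc (card {p\<in>P. p < y})"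
proof -
  let ?A = "{p\<in>P. p > y}"
  have ne: "?A \<noteq> {}"
  proof
    assume e: "?A = {}"
    have "p < y" if "p \<in> P" for p
    proof -
      have "p \<noteq> y" using y that by auto
      moreover have "\<not> y < p" using e that by auto
      ultimately show ?thesis by linarith
    qed
    then have "{p\<in>P. p < y} = P" by auto
    then show False using lt by simp
  qed
  have fa: "finite ?A" using fin by auto
  let ?q = "Min ?A"
  have q: "?q \<in> ?A" using Min_in[OF fa ne] .
  have qm: "\<And>p. p \<in> ?A \<Longrightarrow> ?q \<le> p" using Min_le[OF fa] by blast
  obtain y' where y': "y' > ?q" "y' \<notin> P" "{p\<in>P. p < y'} = {p\<in>P. p \<le> ?q}"
    using count_same[OF fin, of "?q"] by blast
  have "{p\<in>P. p \<le> ?q} = insert ?q {p\<in>P. p < y}"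
  proof (intro equalityI subsetI)
    fix p assume p: "p \<in> {p\<in>P. p \<le> ?q}"
    show "p \<in> insert ?q {p\<in>P. p < y}"
    proof (cases "p < y")
      case False
      then have "p > y" using p y by (metis (mono_tags, lifting) linorder_neqE_linordered_idom mem_Collect_eq)
      then have "?q \<le> p" using qm p by auto
      then show ?thesis using p by auto
    qed (use p in auto)
  next
    fix p assume "p \<in> insert ?q {p\<in>P. p < y}"
    then show "p \<in> {p\<in>P. p \<le> ?q}" using q by auto
  qed
  moreover have "?q \<notin> {p\<in>P. p < y}" using q by auto
  ultimately have "card {p\<in>P. p < y'} = Suc (card {p\<in>P. p < y})"
    using y'(3) fin by simp
  moreover have "y' > y" using y'(1) q by auto
  ultimately show ?thesis using y'(2) by blast
qed

lemma count_reach: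
  fixes P :: "real set"
  assumes fin: "finite P"
  shows "y \<notin> P \<Longrightarrow> card {p\<in>P. p < y} + d \<le> card P \<Longrightarrow>
    \<exists>y'>y. y' \<notin> P \<and> card {p\<in>P. p < y'} = card {p\<in>P. p < y} + d"
proof (induction d arbitrary: y)
  case 0
  obtain y' where "y' > y" "y' \<notin> P" "{p\<in>P. p < y'} = {p\<in>P. p \<le> y}"
    using count_same[OF fin, of y] by blast
  moreover have "{p\<in>P. p \<le> y} = {p\<in>P. p < y}"
  proof (intro Collect_cong conj_cong refl)
    fix p assume "p \<in> P" then have "p \<noteq> y" using 0 by auto
    then show "p \<le> y \<longleftrightarrow> p < y" by auto
  qed
  ultimately show ?case by auto
next
  case (Suc d)
  obtain y1 where y1: "y1 > y" "y1 \<notin> P" "card {p\<in>P. p < y1} = Suc (card {p\<in>P. p < y})"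
    using count_step[OF fin Suc.prems(1)] Suc.prems(2) by auto
  obtain y' where "y' > y1" "y' \<notin> P" "card {p\<in>P. p < y'} = card {p\<in>P. p < y1} + d"
    using Suc.IH[OF y1(2)] y1(3) Suc.prems(2) by auto
  then show ?case using y1 by (intro exI[of _ y']) auto
qed

lemma card_img_less:
  fixes f :: "'a \<Rightarrow> real"
  assumes "inj_on f S"
  shows "card {p\<in>f ` S. p < y} = card {q\<in>S. f q < y}"
proof -
  have "{p\<in>f ` S. p < y} = f ` {q\<in>S. f q < y}" by auto
  moreover have "inj_on f {q\<in>S. f q < y}" using assms by (rule inj_on_subset) auto
  ultimately show ?thesis by (simp add: card_image)
qed

lemma constr_step:
  assumes i: "1 \<le> i" "i < N" and dx: "dec_on {Suc i..N} x" and gx: "gen_on {Suc i..N} m x"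
    and c: "cnt m N x (Suc i) \<le> c" "c \<le> m * (N - i)"
  shows "\<exists>y. dec_on {i..N} (x(i:=y)) \<and> gen_on {i..N} m (x(i:=y)) \<and> cnt m N (x(i:=y)) i = c
     \<and> (\<forall>k\<in>{Suc i..N}. cnt m N (x(i:=y)) k = cnt m N x k)"
proof -
  let ?S = "{Suc i..N} \<times> {1..m}"
  define f where "f = (\<lambda>p. x (fst p) + real (snd p))"
  let ?P = "f ` ?S"
  have genx: "x a + of_int t \<noteq> x b" if "a \<in> {Suc i..N}" "b \<in> {Suc i..N}" "a \<noteq> b" "\<bar>t\<bar> \<le> int m" for a b t
    using gx that unfolding gen_on_def by blast
  have inj: "inj_on f ?S"
  proof (rule inj_onI)
    fix p q assume p: "p \<in> ?S" and q: "q \<in> ?S" and e: "f p = f q"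
    obtain l t where pl: "p = (l,t)" by force
    obtain l' t' where ql: "q = (l',t')" by force
    have l: "l \<in> {Suc i..N}" "t \<in> {1..m}" "l' \<in> {Suc i..N}" "t' \<in> {1..m}" using p q pl ql by auto
    have e': "x l + of_int (int t - int t') = x l'" using e pl ql unfolding f_def by simp
    have "l = l'"
    proof (rule ccontr)
      assume "l \<noteq> l'"
      moreover have "\<bar>int t - int t'\<bar> \<le> int m" using l by auto
      ultimately show False using genx[of l l' "int t - int t'"] l e' by auto
    qed
    then show "p = q" using e pl ql unfolding f_def by simp
  qed
  have fin: "finite ?P" by simp
  have cP: "card ?P = m * (N - i)" using card_image[OF inj] by (simp add: card_cartesian_product)
  let ?y0 = "x (Suc i)"
  have y0: "?y0 \<notin> ?P"
  proof
    assume "?y0 \<in> ?P"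
    then obtain l t where l: "l \<in> {Suc i..N}" "t \<in> {1..m}" and e: "?y0 = x l + real t"
      unfolding f_def by auto
    show False
    proof (cases "l = Suc i")
      case True then show False using e l by auto
    next
      case False
      have "x l + of_int (int t) \<noteq> x (Suc i)" using genx[of l "Suc i" "int t"] l i False by auto
      then show False using e by simp
    qed
  qed
  have c0: "card {p\<in>?P. p < ?y0} = cnt m N x (Suc i)"
  proof -
    have h: "Suc (Suc i) \<le> a" if "x a + real b < x (Suc i)" "Suc i \<le> a" "Suc 0 \<le> b" for a b
      using that by (cases "a = Suc i") auto
    have "card {p\<in>?P. p < ?y0} = card {q\<in>?S. f q < ?y0}" by (rule card_img_less[OF inj])
    also have "{q\<in>?S. f q < ?y0} = {p \<in> (SIGMA l:{Suc (Suc i)..N}. {1..m}). x (fst p) + real (snd p) < x (Suc i)}"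
      unfolding f_def using h by auto
    finally show ?thesis unfolding cnt_alt .
  qed
  obtain y where y: "y > ?y0" "y \<notin> ?P" "card {p\<in>?P. p < y} = c"
    using count_reach[OF fin y0, of "c - cnt m N x (Suc i)"] c c0 cP by auto
  let ?x = "x(i:=y)"
  have yP: "y \<noteq> x l + real t" if "l \<in> {Suc i..N}" "t \<in> {1..m}" for l t
    using y(2) that unfolding f_def by force
  have xl: "x l < y" if "l \<in> {Suc i..N}" for l
  proof (cases "l = Suc i")
    case True then show ?thesis using y by simp
  next
    case False then have "x l < x (Suc i)" using dx that i unfolding dec_on_def by auto
    then show ?thesis using y by simp
  qed
  have d: "dec_on {i..N} ?x" unfolding dec_on_def
  proof (intro ballI impI)
    fix a b assume a: "a \<in> {i..N}" and b: "b \<in> {i..N}" and ab: "a < b"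
    show "?x b < ?x a"
    proof (cases "a = i")
      case True then show ?thesis using xl[of b] b ab by auto
    next
      case False then show ?thesis using dx a b ab unfolding dec_on_def by auto
    qed
  qed
  have g: "gen_on {i..N} m ?x" unfolding gen_on_def
  proof (intro ballI impI allI)
    fix a b and t :: int assume a: "a \<in> {i..N}" and b: "b \<in> {i..N}" and ab: "a \<noteq> b" and t: "\<bar>t\<bar> \<le> int m"
    show "?x a + of_int t \<noteq> ?x b"
    proof (cases "a = i")
      case ai: True
      then have b': "b \<in> {Suc i..N}" using b ab by auto
      show ?thesis
      proof (cases "t \<ge> 0")
        case True then show ?thesis using xl[OF b'] ai ab by auto
      next
        case False
        have nt: "nat (-t) \<in> {1..m}" using t False by auto
        have rt: "real (nat (-t)) = - of_int t" using False by simp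
        have "y \<noteq> x b + real (nat (-t))" using yP[OF b' nt] .
        then have "y + of_int t \<noteq> x b" unfolding rt by linarith
        then show ?thesis using ai ab by simp
      qed
    next
      case an: False
      then have a': "a \<in> {Suc i..N}" using a by auto
      show ?thesis
      proof (cases "b = i")
        case bi: True
        show ?thesis
        proof (cases "t \<le> 0")
          case True then show ?thesis using xl[OF a'] bi an by auto
        next
          case False
          have nt: "nat t \<in> {1..m}" using t False by auto
          have rt: "real (nat t) = of_int t" using False by simp
          have "y \<noteq> x a + real (nat t)" using yP[OF a' nt] .
          then have "x a + of_int t \<noteq> y" unfolding rt by linarith
          then show ?thesis using bi an by simp
        qed
      next
        case False
        then have "b \<in> {Suc i..N}" using b by auto
        then show ?thesis using genx[OF a' _ ab t] an False by auto
      qed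
    qed
  qed
  have ci: "cnt m N ?x i = c"
  proof -
    have "cnt m N ?x i = card {q\<in>?S. f q < y}"
      unfolding cnt_alt f_def by (rule arg_cong[where f=card]) auto
    also have "\<dots> = card {p\<in>?P. p < y}" by (rule card_img_less[OF inj, symmetric])
    finally show ?thesis using y(3) by simp
  qed
  have ck: "\<forall>k\<in>{Suc i..N}. cnt m N ?x k = cnt m N x k"
  proof
    fix k assume k: "k \<in> {Suc i..N}"
    show "cnt m N ?x k = cnt m N x k" unfolding cnt_def
      by (rule arg_cong[where f=card]) (use k in auto)
  qed
  show ?thesis using d g ci ck by blast
qed

lemma construct:
  assumes lam: "lam \<in> partitions_P n m"
  shows "\<exists>x. dec_on {1..Suc n} x \<and> gen_on {1..Suc n} m x \<and> (\<forall>k\<in>{1..n}. cnt m (Suc n) x k = lam k)"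
proof -
  let ?N = "Suc n"
  let ?l = "\<lambda>k. if k \<le> n then lam k else 0"
  have mono: "lam (Suc i) \<le> lam i" if "1 \<le> i" "i < n" for i
    using lam that unfolding partitions_P_def by auto
  have bd: "lam i \<le> m * (n - i + 1)" if "i \<in> {1..n}" for i
    using lam that unfolding partitions_P_def by auto
  have "1 \<le> ?N" by simp
  then have "\<exists>x. dec_on {1..?N} x \<and> gen_on {1..?N} m x \<and> (\<forall>k\<in>{1..?N}. cnt m ?N x k = ?l k)"
  proof (induction rule: inc_induct)
    case base
    show ?case
      by (intro exI[of _ "\<lambda>_. 0"]) (auto simp: dec_on_def gen_on_def cnt_def)
  next
    case (step i)
    then obtain x where x: "dec_on {Suc i..?N} x" "gen_on {Suc i..?N} m x"
      "\<forall>k\<in>{Suc i..?N}. cnt m ?N x k = ?l k" by blast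
    have i: "1 \<le> i" "i \<le> n" using step.hyps by auto
    have c1: "cnt m ?N x (Suc i) \<le> lam i"
    proof (cases "Suc i \<le> n")
      case True then show ?thesis using x(3) mono[of i] i by auto
    next
      case False then show ?thesis using x(3) i by auto
    qed
    have c2: "lam i \<le> m * (?N - i)" using bd[of i] i by (simp add: Suc_diff_le)
    obtain y where y: "dec_on {i..?N} (x(i:=y))" "gen_on {i..?N} m (x(i:=y))"
      "cnt m ?N (x(i:=y)) i = lam i" "\<forall>k\<in>{Suc i..?N}. cnt m ?N (x(i:=y)) k = cnt m ?N x k"
      using constr_step[OF i(1) _ x(1) x(2) c1 c2] i by auto
    have "\<forall>k\<in>{i..?N}. cnt m ?N (x(i:=y)) k = ?l k"
    proof
      fix k assume k: "k \<in> {i..?N}"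
      show "cnt m ?N (x(i:=y)) k = ?l k"
      proof (cases "k = i")
        case True then show ?thesis using y(3) i by simp
      next
        case False then have "k \<in> {Suc i..?N}" using k by auto
        then show ?thesis using y(4) x(3) by auto
      qed
    qed
    then show ?case using y(1,2) by blast
  qed
  then show ?thesis by auto
qed

lemma normalize:
  assumes d: "dec_on {1..Suc n} x" and g: "gen_on {1..Suc n} m x"
  shows "\<exists>z. z \<in> typeA_V n \<and> dec_on {1..Suc n} z \<and> gen_on {1..Suc n} m z \<and>
    (\<forall>k\<in>{1..n}. cnt m (Suc n) z k = cnt m (Suc n) x k)"
proof -
  define c where "c = (\<Sum>i=1..n+1. x i) / real (n+1)"
  define z where "z = (\<lambda>k. if k \<in> {1..Suc n} then x k - c else 0)"
  have zV: "z \<in> typeA_V n"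
  proof -
    have "(\<Sum>i=1..n+1. z i) = (\<Sum>i=1..n+1. x i - c)" unfolding z_def by (intro sum.cong) auto
    also have "\<dots> = (\<Sum>i=1..n+1. x i) - real (n+1) * c" by (simp add: sum_subtractf)
    also have "\<dots> = 0" unfolding c_def by simp
    finally show ?thesis unfolding typeA_V_def z_def by auto
  qed
  have dz: "dec_on {1..Suc n} z" using d unfolding dec_on_def z_def by auto
  have gz: "gen_on {1..Suc n} m z" using g unfolding gen_on_def z_def
    by (auto simp: algebra_simps)
  have cz: "cnt m (Suc n) z k = cnt m (Suc n) x k" if "k \<in> {1..n}" for k
    unfolding cnt_def z_def by (rule arg_cong[where f=card]) (use that in auto)
  show ?thesis using zV dz gz cz by blast
qed

lemma L1conv:
  assumes V: "x \<in> typeA_V n" and d: "dec_on {1..Suc n} x" and g: "gen_on {1..Suc n} m x"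
  shows "x \<in> typeA_V n - cat_hyperplanes n m" "x \<in> dominant_cone n"
proof -
  show "x \<in> dominant_cone n" using d unfolding dominant_cone_def dec_on_def root_pair_def
    by (auto intro: less_imp_le)
  have "x \<notin> cat_hyperplanes n m"
  proof
    assume "x \<in> cat_hyperplanes n m"
    then obtain i j k where ijk: "1 \<le> i" "i \<le> j" "j \<le> n" "k \<le> m" and e: "x i - x (j+1) = real k"
      unfolding cat_hyperplanes_def root_pair_def by blast
    have h: "i \<in> {1..Suc n}" "j+1 \<in> {1..Suc n}" "i \<noteq> j+1" "\<bar>- int k\<bar> \<le> int m" using ijk by auto
    have "x i + of_int (- int k) \<noteq> x (j+1)" using g h unfolding gen_on_def by blast
    then show False using e by simp
  qed
  then show "x \<in> typeA_V n - cat_hyperplanes n m" using V by simp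
qed

theorem theorem4p1:
  fixes n m :: nat
  assumes "0 < n" and "0 < m"
  shows "bij_betw (phi n m) (dominant_regions n m) (partitions_P n m)"
proof -
  let ?U = "typeA_V n - cat_hyperplanes n m"
  have reg: "\<exists>x. x \<in> ?U \<and> R = connected_component_set ?U x \<and> x \<in> dominant_cone n"
    if RR: "R \<in> dominant_regions n m" for R
  proof -
    obtain x where x: "x \<in> ?U" "R = connected_component_set ?U x" "R \<subseteq> dominant_cone n"
      using RR unfolding dominant_regions_def cat_regions_def by blast
    then have "x \<in> R" by simp
    then show ?thesis using x by blast
  qed
  have inP: "phi n m R \<in> partitions_P n m" if R: "R \<in> dominant_regions n m" for R
  proof -
    obtain x where x: "x \<in> ?U" "R = connected_component_set ?U x" "x \<in> dominant_cone n"
      using reg[OF R] by blast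
    have d: "dec_on {1..Suc n} x" using L1[OF x(1) x(3)] by simp
    have pc: "phi n m R i = cnt m (Suc n) x i" if "i \<in> {1..n}" for i
      using L2[OF x(1) x(2) that] .
    show ?thesis unfolding partitions_P_def
    proof (intro CollectI conjI allI impI ballI)
      fix i :: nat assume ni: "i \<notin> {1..n}" show "phi n m R i = 0" unfolding phi_def using ni by (rule if_not_P)
    next
      fix i :: nat assume i: "1 \<le> i \<and> i < n"
      have "phi n m R (i+1) = cnt m (Suc n) x (Suc i)" using pc[of "i+1"] i by simp
      also have "\<dots> \<le> cnt m (Suc n) x i" using cnt_mono[OF d] i by simp
      also have "\<dots> = phi n m R i" using pc[of i] i by simp
      finally show "phi n m R (i+1) \<le> phi n m R i" .
    next
      fix i assume i: "i \<in> {1..n}"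
      have "phi n m R i = cnt m (Suc n) x i" using pc[OF i] .
      also have "\<dots> \<le> m * (Suc n - i)" by (rule cnt_le)
      also have "\<dots> = m * (n - i + 1)" using i by (simp add: Suc_diff_le)
      finally show "phi n m R i \<le> m * (n - i + 1)" .
    qed
  qed
  have inj: "inj_on (phi n m) (dominant_regions n m)"
  proof (rule inj_onI)
    fix R1 R2 assume R1: "R1 \<in> dominant_regions n m" and R2: "R2 \<in> dominant_regions n m"
      and e: "phi n m R1 = phi n m R2"
    obtain x where x: "x \<in> ?U" "R1 = connected_component_set ?U x" "x \<in> dominant_cone n"
      using reg[OF R1] by blast
    obtain y where y: "y \<in> ?U" "R2 = connected_component_set ?U y" "y \<in> dominant_cone n"
      using reg[OF R2] by blast
    have ce: "cnt m (Suc n) x i = cnt m (Suc n) y i" if "1 \<le> i" "i < Suc n" for i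
    proof -
      have "i \<in> {1..n}" using that by auto
      then show ?thesis using L2[OF x(1) x(2)] L2[OF y(1) y(2)] e by metis
    qed
    have cmp: "\<forall>a\<in>{1..Suc n}. \<forall>b\<in>{1..Suc n}. \<forall>t::int. \<bar>t\<bar> \<le> int m \<longrightarrow> (x b + of_int t < x a \<longleftrightarrow> y b + of_int t < y a)"
      by (rule L4) (use L1[OF x(1) x(3)] L1[OF y(1) y(3)] ce in auto)
    have "y \<in> connected_component_set ?U x"
    proof (rule L3[OF x(1) y(1)])
      fix i j k assume ijk: "1 \<le> i" "i \<le> j" "j \<le> n" "k \<le> m"
      have h: "i \<in> {1..Suc n}" "j+1 \<in> {1..Suc n}" "\<bar>int k\<bar> \<le> int m" using ijk by auto
      have "x (j+1) + of_int (int k) < x i \<longleftrightarrow> y (j+1) + of_int (int k) < y i"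
        using cmp h by blast
      then show "root_pair i j y > real k \<longleftrightarrow> root_pair i j x > real k"
        unfolding root_pair_def by auto
    qed
    then have "connected_component_set ?U y = connected_component_set ?U x"
      by (rule connected_component_eq)
    then show "R1 = R2" using x y by simp
  qed
  have surj: "lam \<in> phi n m ` dominant_regions n m" if lam: "lam \<in> partitions_P n m" for lam
  proof -
    obtain x where x: "dec_on {1..Suc n} x" "gen_on {1..Suc n} m x" "\<forall>k\<in>{1..n}. cnt m (Suc n) x k = lam k"
      using construct[OF lam] by blast
    obtain z where z: "z \<in> typeA_V n" "dec_on {1..Suc n} z" "gen_on {1..Suc n} m z"
      "\<forall>k\<in>{1..n}. cnt m (Suc n) z k = cnt m (Suc n) x k"
      using normalize[OF x(1) x(2)] by blast
    have zU: "z \<in> ?U" and zd: "z \<in> dominant_cone n" using L1conv[OF z(1) z(2) z(3)] by auto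
    define R where "R = connected_component_set ?U z"
    have Rc: "R \<in> cat_regions n m" unfolding cat_regions_def R_def using zU by blast
    have Rd: "R \<subseteq> dominant_cone n"
    proof
      fix w assume w: "w \<in> R"
      show "w \<in> dominant_cone n" unfolding dominant_cone_def
      proof (intro CollectI allI impI)
        fix i j assume ij: "1 \<le> i \<and> i \<le> j \<and> j \<le> n"
        have ne: "\<forall>v\<in>?U. root_pair i j v \<noteq> real 0" using ij unfolding cat_hyperplanes_def by fastforce
        have "root_pair i j z \<ge> 0" using zd ij unfolding dominant_cone_def by blast
        moreover have "root_pair i j z \<noteq> 0" using ne zU by auto
        ultimately have "root_pair i j z > real 0" by simp
        then have "root_pair i j w > real 0" using comp_sign[OF _ ne rp_cont] w unfolding R_def by blast
        then show "root_pair i j w \<ge> 0" by simp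
      qed
    qed
    have RD: "R \<in> dominant_regions n m" unfolding dominant_regions_def using Rc Rd by blast
    have "phi n m R = lam"
    proof
      fix i show "phi n m R i = lam i"
      proof (cases "i \<in> {1..n}")
        case True
        then show ?thesis using L2[OF zU R_def True] z(4) x(3) by simp
      next
        case False
        have "lam i = 0" using lam False unfolding partitions_P_def by blast
        moreover have "phi n m R i = 0" unfolding phi_def using False by (rule if_not_P)
        ultimately show ?thesis by simp
      qed
    qed
    then show ?thesis using RD by blast
  qed
  show ?thesis unfolding bij_betw_def using inj inP surj by blast
qed

end
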